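(* Let $m\ge n$ and $s,r$ be positive integers with $s\le m$ and $r\le n$, and let $A\in\mathbb{R}^{m\times n}$. For indeterminates $y,z$ define the $m\times n$ matrix \[ \tilde A(y,z)=\begin{pmatrix}yI_s&0\\0&I_{m-s}\end{pmatrix}A\begin{pmatrix}zI_r&0\\0&I_{n-r}\end{pmatrix} \] and $\theta_A(x,y,z)=\det\big(xI_n+\tilde A(y,z)^T\tilde A(y,z)\big)$. Then \[ \theta_A(x,y,z)=\sum_{j=0}^n\sum_{p=0}^s\sum_{q=0}^r x^{n-j}y^{2p}z^{2q}A^j_{p,q},\qquad A^j_{p,q}=\sum_{\substack{X\subseteq[m],\,Y\subseteq[n],\ |X|=|Y|=j\\ |X\cap[s]|=p,\ |Y\cap[r]|=q}}[A]_{X,Y}^2 . \]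
   Context: For a matrix $C$ and index sets $S,T$ with $|S|=|T|$, $[C]_{S,T}=\det(\{C_{ij}\}_{i\in S,j\in T})$ is the $(S,T)$-minor, with $[C]_{\varnothing,\varnothing}=1$. $[N]=\{1,\dots,N\}$. *)

theory Defs
  imports "Jordan_Normal_Form.Determinant" "Jordan_Normal_Form.DL_Submatrix"
begin

text \<open>The (S,T)-minor of C: determinant of the submatrix with rows in S and columns in T
  (indices are 0-based; rows/columns kept in increasing order).\<close>
definition minor :: "'a::comm_ring_1 mat \<Rightarrow> nat set \<Rightarrow> nat set \<Rightarrow> 'a" where
  "minor C S T = det (submatrix C S T)"

definition scal_block :: "nat \<Rightarrow> nat \<Rightarrow> 'a::comm_ring_1 \<Rightarrow> 'a mat" where
  "scal_block d k c = four_block_mat (c \<cdot>\<^sub>m 1\<^sub>m k) (0\<^sub>m k (d - k)) (0\<^sub>m (d - k) k) (1\<^sub>m (d - k))"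

definition A_tilde :: "nat \<Rightarrow> nat \<Rightarrow> nat \<Rightarrow> nat \<Rightarrow> real mat \<Rightarrow> real \<Rightarrow> real \<Rightarrow> real mat" where
  "A_tilde m n s r A y z = scal_block m s y * A * scal_block n r z"

definition theta :: "nat \<Rightarrow> nat \<Rightarrow> nat \<Rightarrow> nat \<Rightarrow> real mat \<Rightarrow> real \<Rightarrow> real \<Rightarrow> real \<Rightarrow> real" where
  "theta m n s r A x y z =
     det (x \<cdot>\<^sub>m 1\<^sub>m n + transpose_mat (A_tilde m n s r A y z) * A_tilde m n s r A y z)"

definition coeffA :: "nat \<Rightarrow> nat \<Rightarrow> nat \<Rightarrow> nat \<Rightarrow> real mat \<Rightarrow> nat \<Rightarrow> nat \<Rightarrow> nat \<Rightarrow> real" where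
  "coeffA m n s r A j p q =
     (\<Sum>X\<in>{X. X \<subseteq> {0..<m} \<and> card X = j \<and> card (X \<inter> {0..<s}) = p}.
       \<Sum>Y\<in>{Y. Y \<subseteq> {0..<n} \<and> card Y = j \<and> card (Y \<inter> {0..<r}) = q}.
         (minor A X Y)\<^sup>2)"

end

theory Submission
  imports Defs
begin


lemma pick_bij:
  assumes "finite T"
  shows "bij_betw (pick T) {0..<card T} T"
proof -
  have inj: "inj_on (pick T) {0..<card T}"
  proof (rule inj_onI)
    fix a b assume a: "a \<in> {0..<card T}" and b: "b \<in> {0..<card T}" and e: "pick T a = pick T b"
    show "a = b"
    proof (rule ccontr)
      assume "a \<noteq> b"
      then consider "a < b" | "b < a" by linarith
      thus False
      proof cases
        case 1 thus False using pick_mono_le[of b T a] b e by simp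
      next
        case 2 thus False using pick_mono_le[of a T b] a e by simp
      qed
    qed
  qed
  have sub: "pick T ` {0..<card T} \<subseteq> T" using pick_in_set_le by auto
  have "card (pick T ` {0..<card T}) = card T" using card_image[OF inj] by simp
  hence "pick T ` {0..<card T} = T" using card_subset_eq[OF assms sub] by simp
  thus ?thesis using inj by (simp add: bij_betw_def)
qed

lemma sum_perm_bij:
  fixes G :: "'b \<Rightarrow> 'b \<Rightarrow> 'c::comm_ring_1"
  assumes e: "bij_betw e A B" and fA: "finite A"
  shows "(\<Sum>\<sigma>\<in>{\<sigma>. \<sigma> permutes B}. of_int (sign \<sigma>) * (\<Prod>b\<in>B. G b (\<sigma> b)))
       = (\<Sum>\<tau>\<in>{\<tau>. \<tau> permutes A}. of_int (sign \<tau>) * (\<Prod>a\<in>A. G (e a) (e (\<tau> a))))"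
proof -
  let ?h = "map_permutation A e"
  let ?g = "map_permutation B (inv_into A e)"
  have ie: "bij_betw (inv_into A e) B A" using e by (rule bij_betw_inv_into)
  have inj: "inj_on e A" using e by (simp add: bij_betw_def)
  have hb: "bij_betw ?h {\<tau>. \<tau> permutes A} {\<sigma>. \<sigma> permutes B}"
  proof (rule bij_betw_byWitness[where f' = ?g])
    show "\<forall>a\<in>{\<tau>. \<tau> permutes A}. ?g (?h a) = a"
    proof
      fix \<tau> assume "\<tau> \<in> {\<tau>. \<tau> permutes A}"
      hence t: "\<tau> permutes A" by simp
      show "?g (?h \<tau>) = \<tau>"
        by (rule map_permutation_compose_inv[OF e t]) (rule inv_into_f_f[OF inj])
    qed
    show "\<forall>a'\<in>{\<sigma>. \<sigma> permutes B}. ?h (?g a') = a'"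
    proof
      fix \<sigma> assume "\<sigma> \<in> {\<sigma>. \<sigma> permutes B}"
      hence t: "\<sigma> permutes B" by simp
      have fx: "\<And>x. x \<in> B \<Longrightarrow> e (inv_into A e x) = x"
        using e by (simp add: bij_betw_def f_inv_into_f)
      show "?h (?g \<sigma>) = \<sigma>"
        by (rule map_permutation_compose_inv[OF ie t]) (rule fx)
    qed
    show "?h ` {\<tau>. \<tau> permutes A} \<subseteq> {\<sigma>. \<sigma> permutes B}"
      using map_permutation_permutes[OF e] by auto
    show "?g ` {\<sigma>. \<sigma> permutes B} \<subseteq> {\<tau>. \<tau> permutes A}"
      using map_permutation_permutes[OF ie] by auto
  qed
  have "(\<Sum>\<sigma>\<in>{\<sigma>. \<sigma> permutes B}. of_int (sign \<sigma>) * (\<Prod>b\<in>B. G b (\<sigma> b)))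
      = (\<Sum>\<tau>\<in>{\<tau>. \<tau> permutes A}. of_int (sign (?h \<tau>)) * (\<Prod>b\<in>B. G b (?h \<tau> b)))"
    by (rule sum.reindex_bij_betw[OF hb, symmetric])
  also have "\<dots> = (\<Sum>\<tau>\<in>{\<tau>. \<tau> permutes A}. of_int (sign \<tau>) * (\<Prod>a\<in>A. G (e a) (e (\<tau> a))))"
  proof (rule sum.cong[OF refl])
    fix \<tau> assume "\<tau> \<in> {\<tau>. \<tau> permutes A}"
    hence t: "\<tau> permutes A" by simp
    have "sign (?h \<tau>) = sign \<tau>" by (rule sign_map_permutation[OF inj t fA])
    moreover have "(\<Prod>b\<in>B. G b (?h \<tau> b)) = (\<Prod>a\<in>A. G (e a) (?h \<tau> (e a)))"
      by (rule prod.reindex_bij_betw[OF e, symmetric])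
    moreover have "\<And>a. a \<in> A \<Longrightarrow> ?h \<tau> (e a) = e (\<tau> a)"
      by (rule map_permutation_apply[OF inj])
    ultimately show "of_int (sign (?h \<tau>)) * (\<Prod>b\<in>B. G b (?h \<tau> b)) = of_int (sign \<tau>) * (\<Prod>a\<in>A. G (e a) (e (\<tau> a)))"
      by (metis (no_types, lifting) prod.cong)
  qed
  finally show ?thesis .
qed

lemma det_submatrix_gdet:
  fixes N :: "'a::comm_ring_1 mat"
  assumes N: "N \<in> carrier_mat n n" and T: "T \<subseteq> {0..<n}"
  shows "det (submatrix N T T) = (\<Sum>\<sigma>\<in>{\<sigma>. \<sigma> permutes T}. signof \<sigma> * (\<Prod>i\<in>T. N $$ (i, \<sigma> i)))"
proof -
  have fT: "finite T" using T finite_subset by blast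
  have cT: "{i. i < n \<and> i \<in> T} = T" using T by auto
  have dN: "dim_row N = n" "dim_col N = n" using N by auto
  have dS: "dim_row (submatrix N T T) = card T" "dim_col (submatrix N T T) = card T"
    by (simp_all only: dim_submatrix dN cT)
  hence car: "submatrix N T T \<in> carrier_mat (card T) (card T)"
    by (intro carrier_matI)
  have "det (submatrix N T T) = (\<Sum>\<tau>\<in>{\<tau>. \<tau> permutes {0..<card T}}. signof \<tau> * (\<Prod>a=0..<card T. submatrix N T T $$ (a, \<tau> a)))"
    by (rule det_def'[OF car])
  also have "\<dots> = (\<Sum>\<tau>\<in>{\<tau>. \<tau> permutes {0..<card T}}. signof \<tau> * (\<Prod>a=0..<card T. N $$ (pick T a, pick T (\<tau> a))))"
  proof (rule sum.cong[OF refl])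
    fix \<tau> assume t: "\<tau> \<in> {\<tau>. \<tau> permutes {0..<card T}}"
    have "(\<Prod>a=0..<card T. submatrix N T T $$ (a, \<tau> a)) = (\<Prod>a=0..<card T. N $$ (pick T a, pick T (\<tau> a)))"
    proof (rule prod.cong[OF refl])
      fix a assume a: "a \<in> {0..<card T}"
      have "\<tau> a \<in> {0..<card T}" using permutes_in_image[of \<tau> "{0..<card T}" a] t a by simp
      thus "submatrix N T T $$ (a, \<tau> a) = N $$ (pick T a, pick T (\<tau> a))"
        using a by (intro submatrix_index) (simp_all only: dN cT atLeastLessThan_iff)
    qed
    thus "signof \<tau> * (\<Prod>a=0..<card T. submatrix N T T $$ (a, \<tau> a)) = signof \<tau> * (\<Prod>a=0..<card T. N $$ (pick T a, pick T (\<tau> a)))"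
      by (rule arg_cong)
  qed
  also have "\<dots> = (\<Sum>\<sigma>\<in>{\<sigma>. \<sigma> permutes T}. signof \<sigma> * (\<Prod>i\<in>T. N $$ (i, \<sigma> i)))"
    by (rule sum_perm_bij[OF pick_bij[OF fT] finite_atLeastLessThan, of "\<lambda>i j. N $$ (i, j)", symmetric])
  finally show ?thesis .
qed


lemma perm_fix_iff:
  assumes T: "T \<subseteq> {0..<n}"
  shows "(\<sigma> permutes {0..<n} \<and> (\<forall>i\<in>{0..<n} - T. \<sigma> i = i)) = (\<sigma> permutes T)"
proof
  assume a: "\<sigma> permutes {0..<n} \<and> (\<forall>i\<in>{0..<n} - T. \<sigma> i = i)"
  show "\<sigma> permutes T" unfolding permutes_def
  proof
    show "\<forall>x. x \<notin> T \<longrightarrow> \<sigma> x = x"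
      using a unfolding permutes_def by blast
    show "\<forall>y. \<exists>!x. \<sigma> x = y" using a unfolding permutes_def by blast
  qed
next
  assume a: "\<sigma> permutes T"
  show "\<sigma> permutes {0..<n} \<and> (\<forall>i\<in>{0..<n} - T. \<sigma> i = i)"
  proof
    show "\<sigma> permutes {0..<n}" by (rule permutes_subset[OF a T])
    show "\<forall>i\<in>{0..<n} - T. \<sigma> i = i" using a unfolding permutes_def by blast
  qed
qed

lemma prod_diag_part:
  fixes x :: "'a::comm_ring_1"
  assumes T: "T \<subseteq> {0..<n}"
  shows "(\<Prod>i\<in>{0..<n} - T. if i = \<sigma> i then x else 0)
     = (if (\<forall>i\<in>{0..<n} - T. \<sigma> i = i) then x ^ (n - card T) else 0)"
proof (cases "\<forall>i\<in>{0..<n} - T. \<sigma> i = i")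
  case True
  hence "(\<Prod>i\<in>{0..<n} - T. if i = \<sigma> i then x else 0) = (\<Prod>i\<in>{0..<n} - T. x)"
    by (intro prod.cong) auto
  also have "\<dots> = x ^ card ({0..<n} - T)" by simp
  also have "card ({0..<n} - T) = n - card T"
    using T by (simp add: card_Diff_subset finite_subset)
  finally show ?thesis using True by simp
next
  case False
  then obtain i where i: "i \<in> {0..<n} - T" "\<sigma> i \<noteq> i" by blast
  have "(\<Prod>i\<in>{0..<n} - T. if i = \<sigma> i then x else 0) = 0"
    using i by (intro prod_zero bexI[of _ i]) auto
  thus ?thesis by (simp only: if_not_P[OF False])
qed

lemma det_xI_plus:
  fixes N :: "'a::comm_ring_1 mat"
  assumes N: "N \<in> carrier_mat n n"
  shows "det (x \<cdot>\<^sub>m 1\<^sub>m n + N) = (\<Sum>T\<in>Pow {0..<n}. x ^ (n - card T) * det (submatrix N T T))"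
proof -
  let ?P = "{\<sigma>. \<sigma> permutes {0..<n}}"
  let ?d = "\<lambda>\<sigma> i. if i = \<sigma> i then x else 0"
  have car: "x \<cdot>\<^sub>m 1\<^sub>m n + N \<in> carrier_mat n n" using N by simp
  have "det (x \<cdot>\<^sub>m 1\<^sub>m n + N) = (\<Sum>\<sigma>\<in>?P. signof \<sigma> * (\<Prod>i=0..<n. (x \<cdot>\<^sub>m 1\<^sub>m n + N) $$ (i, \<sigma> i)))"
    by (rule det_def'[OF car])
  also have "\<dots> = (\<Sum>\<sigma>\<in>?P. signof \<sigma> * (\<Prod>i=0..<n. N $$ (i, \<sigma> i) + ?d \<sigma> i))"
  proof (rule sum.cong[OF refl])
    fix \<sigma> assume s: "\<sigma> \<in> ?P"
    have "(\<Prod>i=0..<n. (x \<cdot>\<^sub>m 1\<^sub>m n + N) $$ (i, \<sigma> i)) = (\<Prod>i=0..<n. N $$ (i, \<sigma> i) + ?d \<sigma> i)"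
    proof (rule prod.cong[OF refl])
      fix i assume i: "i \<in> {0..<n}"
      have si: "\<sigma> i < n" using permutes_in_image[of \<sigma> "{0..<n}" i] s i by simp
      show "(x \<cdot>\<^sub>m 1\<^sub>m n + N) $$ (i, \<sigma> i) = N $$ (i, \<sigma> i) + ?d \<sigma> i"
        using i si N by auto
    qed
    thus "signof \<sigma> * (\<Prod>i=0..<n. (x \<cdot>\<^sub>m 1\<^sub>m n + N) $$ (i, \<sigma> i)) = signof \<sigma> * (\<Prod>i=0..<n. N $$ (i, \<sigma> i) + ?d \<sigma> i)"
      by (rule arg_cong)
  qed
  also have "\<dots> = (\<Sum>\<sigma>\<in>?P. \<Sum>T\<in>Pow {0..<n}. signof \<sigma> * ((\<Prod>i\<in>T. N $$ (i, \<sigma> i)) * (\<Prod>i\<in>{0..<n} - T. ?d \<sigma> i)))"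
    by (simp only: prod_add[OF finite_atLeastLessThan] sum_distrib_left)
  also have "\<dots> = (\<Sum>T\<in>Pow {0..<n}. \<Sum>\<sigma>\<in>?P. signof \<sigma> * ((\<Prod>i\<in>T. N $$ (i, \<sigma> i)) * (\<Prod>i\<in>{0..<n} - T. ?d \<sigma> i)))"
    by (rule sum.swap)
  also have "\<dots> = (\<Sum>T\<in>Pow {0..<n}. x ^ (n - card T) * det (submatrix N T T))"
  proof (rule sum.cong[OF refl])
    fix T assume "T \<in> Pow {0..<n}"
    hence T: "T \<subseteq> {0..<n}" by simp
    have "(\<Sum>\<sigma>\<in>?P. signof \<sigma> * ((\<Prod>i\<in>T. N $$ (i, \<sigma> i)) * (\<Prod>i\<in>{0..<n} - T. ?d \<sigma> i)))
       = (\<Sum>\<sigma>\<in>?P. if (\<forall>i\<in>{0..<n} - T. \<sigma> i = i) then x ^ (n - card T) * (signof \<sigma> * (\<Prod>i\<in>T. N $$ (i, \<sigma> i))) else 0)"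
      by (rule sum.cong[OF refl]) (simp only: prod_diag_part[OF T] if_distrib[where f="\<lambda>z. _ * (_ * z)"] mult_zero_right mult_zero_left ac_simps)
    also have "\<dots> = (\<Sum>\<sigma>\<in>{\<sigma>\<in>?P. \<forall>i\<in>{0..<n} - T. \<sigma> i = i}. x ^ (n - card T) * (signof \<sigma> * (\<Prod>i\<in>T. N $$ (i, \<sigma> i))))"
      by (rule sum.inter_filter[symmetric]) (simp add: finite_permutations)
    also have "{\<sigma>\<in>?P. \<forall>i\<in>{0..<n} - T. \<sigma> i = i} = {\<sigma>. \<sigma> permutes T}"
      using perm_fix_iff[OF T] by blast
    also have "(\<Sum>\<sigma>\<in>{\<sigma>. \<sigma> permutes T}. x ^ (n - card T) * (signof \<sigma> * (\<Prod>i\<in>T. N $$ (i, \<sigma> i))))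
        = x ^ (n - card T) * det (submatrix N T T)"
      by (simp only: det_submatrix_gdet[OF N T] sum_distrib_left)
    finally show "(\<Sum>\<sigma>\<in>?P. signof \<sigma> * ((\<Prod>i\<in>T. N $$ (i, \<sigma> i)) * (\<Prod>i\<in>{0..<n} - T. ?d \<sigma> i)))
       = x ^ (n - card T) * det (submatrix N T T)" .
  qed
  finally show ?thesis .
qed

lemma pick_card_lt:
  fixes X :: "nat set"
  assumes "finite X" "x \<in> X"
  shows "card {b\<in>X. b < x} < card X"
proof -
  have "x \<notin> {b\<in>X. b < x}" by simp
  hence "{b\<in>X. b < x} \<subset> X" using assms(2) by blast
  thus ?thesis by (rule psubset_card_mono[OF assms(1)])
qed

definition ii :: "nat \<Rightarrow> nat set \<times> (nat \<Rightarrow> nat) \<Rightarrow> nat \<Rightarrow> nat" where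
  "ii k p = (\<lambda>a. if a \<in> {0..<k} then pick (fst p) (snd p a) else undefined)"

definition jj :: "nat \<Rightarrow> (nat \<Rightarrow> nat) \<Rightarrow> nat set \<times> (nat \<Rightarrow> nat)" where
  "jj k f = (f ` {0..<k}, \<lambda>a. if a \<in> {0..<k} then card {b \<in> f ` {0..<k}. b < f a} else a)"

lemma jj_in:
  assumes f: "f \<in> {f \<in> PiE {0..<k} (\<lambda>_. {0..<m}). inj_on f {0..<k}}"
  shows "jj k f \<in> Sigma {X. X \<subseteq> {0..<m} \<and> card X = k} (\<lambda>_. {\<pi>. \<pi> permutes {0..<k}})"
proof -
  let ?K = "{0..<k}" and ?X = "f ` {0..<k}"
  have inj: "inj_on f ?K" and fP: "f \<in> PiE ?K (\<lambda>_. {0..<m})" using f by auto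
  have sub: "?X \<subseteq> {0..<m}" using fP by (auto simp: PiE_iff)
  have cX: "card ?X = k" using card_image[OF inj] by simp
  have fX: "finite ?X" by simp
  let ?\<pi> = "\<lambda>a. if a \<in> ?K then card {b \<in> ?X. b < f a} else a"
  have inj\<pi>: "inj_on ?\<pi> ?K"
  proof (rule inj_onI)
    fix a b assume a: "a \<in> ?K" and b: "b \<in> ?K" and e: "?\<pi> a = ?\<pi> b"
    hence "card {c \<in> ?X. c < f a} = card {c \<in> ?X. c < f b}" by simp
    hence "pick ?X (card {c \<in> ?X. c < f a}) = pick ?X (card {c \<in> ?X. c < f b})" by simp
    hence "f a = f b" using pick_card_in_set[of "f a" ?X] pick_card_in_set[of "f b" ?X] a b by simp
    thus "a = b" using inj a b by (simp add: inj_on_def)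
  qed
  have im: "?\<pi> ` ?K \<subseteq> ?K"
  proof
    fix y assume "y \<in> ?\<pi> ` ?K"
    then obtain a where a: "a \<in> ?K" "y = ?\<pi> a" by blast
    have "card {b \<in> ?X. b < f a} < card ?X" using pick_card_lt[OF fX] a by simp
    thus "y \<in> ?K" using a cX by simp
  qed
  have "?\<pi> ` ?K = ?K" by (rule endo_inj_surj[OF finite_atLeastLessThan im inj\<pi>])
  hence "bij_betw ?\<pi> ?K ?K" using inj\<pi> by (simp add: bij_betw_def)
  hence "?\<pi> permutes ?K" by (rule bij_imp_permutes) simp
  thus ?thesis using sub cX unfolding jj_def by simp
qed

lemma ii_jj:
  assumes f: "f \<in> {f \<in> PiE {0..<k} (\<lambda>_. {0..<m}). inj_on f {0..<k}}"
  shows "ii k (jj k f) = f"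
proof
  fix a
  show "ii k (jj k f) a = f a"
  proof (cases "a \<in> {0..<k}")
    case True
    hence "f a \<in> f ` {0..<k}" by blast
    have "ii k (jj k f) a = pick (f ` {0..<k}) (card {b \<in> f ` {0..<k}. b < f a})"
      unfolding ii_def jj_def by (simp only: fst_conv snd_conv if_P[OF True])
    also have "\<dots> = f a" by (rule pick_card_in_set) fact
    finally show ?thesis .
  next
    case False
    have u: "ii k (jj k f) a = undefined" unfolding ii_def by (simp only: if_not_P[OF False])
    have fP: "f \<in> PiE {0..<k} (\<lambda>_. {0..<m})" using f by blast
    have "f a = undefined" by (rule PiE_arb[OF fP False])
    thus ?thesis using u by simp
  qed
qed

lemma ii_in:
  assumes p: "p \<in> Sigma {X. X \<subseteq> {0..<m} \<and> card X = k} (\<lambda>_. {\<pi>. \<pi> permutes {0..<k}})"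
  shows "ii k p \<in> {f \<in> PiE {0..<k} (\<lambda>_. {0..<m}). inj_on f {0..<k}}"
proof -
  obtain X \<pi> where p': "p = (X, \<pi>)" by (cases p)
  have X: "X \<subseteq> {0..<m}" "card X = k" and \<pi>: "\<pi> permutes {0..<k}" using p p' by auto
  have fX: "finite X" using X(1) finite_subset by blast
  have pb: "bij_betw (pick X) {0..<k} X" using pick_bij[OF fX] unfolding X(2) .
  have \<pi>k: "\<And>a. a \<in> {0..<k} \<Longrightarrow> \<pi> a \<in> {0..<k}" using permutes_in_image[OF \<pi>] by simp
  have "ii k p \<in> PiE {0..<k} (\<lambda>_. {0..<m})"
  proof (rule PiE_I)
    fix a assume "a \<in> {0..<k}"
    hence "pick X (\<pi> a) \<in> X" using \<pi>k pb bij_betwE by blast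
    thus "ii k p a \<in> {0..<m}" using X(1) \<open>a \<in> {0..<k}\<close> unfolding ii_def p' by auto
  next
    fix a assume "a \<notin> {0..<k}"
    thus "ii k p a = undefined" unfolding ii_def by simp
  qed
  moreover have "inj_on (ii k p) {0..<k}"
  proof (rule inj_onI)
    fix a b assume a: "a \<in> {0..<k}" and b: "b \<in> {0..<k}" and e: "ii k p a = ii k p b"
    hence "pick X (\<pi> a) = pick X (\<pi> b)" unfolding ii_def p' by simp
    hence "\<pi> a = \<pi> b" using pb \<pi>k a b by (simp add: bij_betw_def inj_on_def)
    thus "a = b" using permutes_inj[OF \<pi>] by (simp add: inj_on_def)
  qed
  ultimately show ?thesis by simp
qed

lemma jj_ii:
  assumes p: "p \<in> Sigma {X. X \<subseteq> {0..<m} \<and> card X = k} (\<lambda>_. {\<pi>. \<pi> permutes {0..<k}})"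
  shows "jj k (ii k p) = p"
proof -
  obtain X \<pi> where p': "p = (X, \<pi>)" by (cases p)
  have X: "X \<subseteq> {0..<m}" "card X = k" and \<pi>: "\<pi> permutes {0..<k}" using p p' by auto
  have fX: "finite X" using X(1) finite_subset by blast
  have pb: "bij_betw (pick X) {0..<k} X" using pick_bij[OF fX] unfolding X(2) .
  have \<pi>k: "\<And>a. a \<in> {0..<k} \<Longrightarrow> \<pi> a \<in> {0..<k}" using permutes_in_image[OF \<pi>] by simp
  have im: "ii k p ` {0..<k} = X"
  proof -
    have "ii k p ` {0..<k} = pick X ` (\<pi> ` {0..<k})" unfolding ii_def p' by (auto simp: image_iff)
    also have "\<pi> ` {0..<k} = {0..<k}" by (rule permutes_image[OF \<pi>])
    also have "pick X ` {0..<k} = X" using pb by (simp add: bij_betw_def)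
    finally show ?thesis .
  qed
  have "(\<lambda>a. if a \<in> {0..<k} then card {b \<in> X. b < ii k p a} else a) = \<pi>"
  proof
    fix a show "(if a \<in> {0..<k} then card {b \<in> X. b < ii k p a} else a) = \<pi> a"
    proof (cases "a \<in> {0..<k}")
      case True
      hence "\<pi> a < card X" using \<pi>k X(2) by auto
      thus ?thesis using True card_pick_le[of "\<pi> a" X] unfolding ii_def p' by simp
    next
      case False thus ?thesis using permutes_not_in[OF \<pi>] by simp
    qed
  qed
  moreover have im': "ii k (X, \<pi>) ` {0..<k} = X" using im unfolding p' .
  ultimately show ?thesis unfolding jj_def p' by (simp only: im' p')
qed

lemma gram_entry:
  fixes D :: "'a::comm_ring_1 mat"
  assumes D: "D \<in> carrier_mat m k" and i: "i < k" and j: "j < k"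
  shows "(transpose_mat D * D) $$ (i, j) = (\<Sum>l\<in>{0..<m}. D $$ (l, i) * D $$ (l, j))"
proof -
  have dD: "dim_row D = m" "dim_col D = k" using D by auto
  have "(transpose_mat D * D) $$ (i, j) = row (transpose_mat D) i \<bullet> col D j"
    using i j dD by (simp add: index_mult_mat)
  also have "\<dots> = (\<Sum>l\<in>{0..<m}. D $$ (l, i) * D $$ (l, j))"
    using i j dD by (simp add: scalar_prod_def)
  finally show ?thesis .
qed

lemma det_rows_noninj:
  fixes D :: "'a::comm_ring_1 mat"
  assumes D: "D \<in> carrier_mat m k" and f: "\<not> inj_on f {0..<k}"
  shows "det (mat k k (\<lambda>(i,j). D $$ (f i, j))) = 0"
proof -
  obtain a b where ab: "a \<in> {0..<k}" "b \<in> {0..<k}" "a \<noteq> b" "f a = f b"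
    using f unfolding inj_on_def by blast
  let ?R = "mat k k (\<lambda>(i,j). D $$ (f i, j))"
  have car: "?R \<in> carrier_mat k k" by simp
  have "row ?R a = row ?R b"
    by (rule eq_vecI) (use ab in auto)
  moreover have "a < k" "b < k" using ab by auto
  ultimately show ?thesis using det_identical_rows[OF car ab(3)] by blast
qed

lemma det_transpose_sum:
  fixes S :: "'a::comm_ring_1 mat"
  assumes S: "S \<in> carrier_mat k k"
  shows "(\<Sum>\<pi>\<in>{\<pi>. \<pi> permutes {0..<k}}. signof \<pi> * (\<Prod>i\<in>{0..<k}. S $$ (\<pi> i, i))) = det S"
proof -
  have St: "transpose_mat S \<in> carrier_mat k k" using S by simp
  have "det S = det (transpose_mat S)" using det_transpose[OF S] by simp
  also have "\<dots> = (\<Sum>\<pi>\<in>{\<pi>. \<pi> permutes {0..<k}}. signof \<pi> * (\<Prod>i=0..<k. transpose_mat S $$ (i, \<pi> i)))"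
    by (rule det_def'[OF St])
  also have "\<dots> = (\<Sum>\<pi>\<in>{\<pi>. \<pi> permutes {0..<k}}. signof \<pi> * (\<Prod>i\<in>{0..<k}. S $$ (\<pi> i, i)))"
  proof (rule sum.cong[OF refl])
    fix \<pi> assume p: "\<pi> \<in> {\<pi>. \<pi> permutes {0..<k}}"
    have "(\<Prod>i=0..<k. transpose_mat S $$ (i, \<pi> i)) = (\<Prod>i\<in>{0..<k}. S $$ (\<pi> i, i))"
    proof (rule prod.cong[OF refl])
      fix i assume i: "i \<in> {0..<k}"
      have "\<pi> i \<in> {0..<k}" using permutes_in_image[of \<pi> "{0..<k}" i] p i by simp
      thus "transpose_mat S $$ (i, \<pi> i) = S $$ (\<pi> i, i)" using i S by auto
    qed
    thus "signof \<pi> * (\<Prod>i=0..<k. transpose_mat S $$ (i, \<pi> i)) = signof \<pi> * (\<Prod>i\<in>{0..<k}. S $$ (\<pi> i, i))"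
      by (rule arg_cong)
  qed
  finally show ?thesis by simp
qed

lemma sub_facts:
  fixes D :: "'a::comm_ring_1 mat"
  assumes D: "D \<in> carrier_mat m k" and X: "X \<subseteq> {0..<m}" "card X = k"
  shows "submatrix D X UNIV \<in> carrier_mat k k"
    and "\<And>a b. a < k \<Longrightarrow> b < k \<Longrightarrow> submatrix D X UNIV $$ (a, b) = D $$ (pick X a, b)"
proof -
  have dD: "dim_row D = m" "dim_col D = k" using D by auto
  have c1: "{i. i < dim_row D \<and> i \<in> X} = X" using X dD by auto
  have c2: "{j. j < dim_col D \<and> j \<in> (UNIV::nat set)} = {0..<k}" using dD by auto
  have "dim_row (submatrix D X UNIV) = k" "dim_col (submatrix D X UNIV) = k"
    unfolding dim_submatrix c1 c2 X(2) by simp_all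
  thus "submatrix D X UNIV \<in> carrier_mat k k" by (intro carrier_matI)
  fix a b assume a: "a < k" and b: "b < k"
  have "submatrix D X UNIV $$ (a, b) = D $$ (pick X a, pick UNIV b)"
    by (rule submatrix_index) (simp_all only: c1 c2 X(2) a b card_atLeastLessThan diff_zero)
  thus "submatrix D X UNIV $$ (a, b) = D $$ (pick X a, b)" by (simp only: pick_UNIV)
qed


lemma gram_det:
  fixes D :: "'a::comm_ring_1 mat"
  assumes D: "D \<in> carrier_mat m k"
  shows "det (transpose_mat D * D) = (\<Sum>X\<in>{X. X \<subseteq> {0..<m} \<and> card X = k}. det (submatrix D X UNIV) ^ 2)"
proof -
  let ?K = "{0..<k}" and ?M = "{0..<m}"
  let ?P = "{\<sigma>. \<sigma> permutes ?K}"
  let ?F = "PiE ?K (\<lambda>_. ?M)"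
  let ?I = "{f \<in> ?F. inj_on f ?K}"
  let ?Xs = "{X. X \<subseteq> ?M \<and> card X = k}"
  define R where "R f = mat k k (\<lambda>(i,j). D $$ (f i, j))" for f
  define h where "h f = (\<Prod>i\<in>?K. D $$ (f i, i)) * det (R f)" for f
  have car: "transpose_mat D * D \<in> carrier_mat k k" using D by simp
  have "det (transpose_mat D * D) = (\<Sum>\<sigma>\<in>?P. signof \<sigma> * (\<Prod>i=0..<k. (transpose_mat D * D) $$ (i, \<sigma> i)))"
    by (rule det_def'[OF car])
  also have "\<dots> = (\<Sum>\<sigma>\<in>?P. signof \<sigma> * (\<Prod>i\<in>?K. \<Sum>l\<in>?M. D $$ (l, i) * D $$ (l, \<sigma> i)))"
  proof (rule sum.cong[OF refl])
    fix \<sigma> assume p: "\<sigma> \<in> ?P"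
    have "(\<Prod>i=0..<k. (transpose_mat D * D) $$ (i, \<sigma> i)) = (\<Prod>i\<in>?K. \<Sum>l\<in>?M. D $$ (l, i) * D $$ (l, \<sigma> i))"
    proof (rule prod.cong[OF refl])
      fix i assume i: "i \<in> ?K"
      have "\<sigma> i \<in> ?K" using permutes_in_image[of \<sigma> ?K i] p i by simp
      thus "(transpose_mat D * D) $$ (i, \<sigma> i) = (\<Sum>l\<in>?M. D $$ (l, i) * D $$ (l, \<sigma> i))"
        using gram_entry[OF D, of i "\<sigma> i"] i by simp
    qed
    thus "signof \<sigma> * (\<Prod>i=0..<k. (transpose_mat D * D) $$ (i, \<sigma> i)) = signof \<sigma> * (\<Prod>i\<in>?K. \<Sum>l\<in>?M. D $$ (l, i) * D $$ (l, \<sigma> i))"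
      by (rule arg_cong)
  qed
  also have "\<dots> = (\<Sum>\<sigma>\<in>?P. \<Sum>f\<in>?F. (\<Prod>i\<in>?K. D $$ (f i, i)) * (signof \<sigma> * (\<Prod>i\<in>?K. D $$ (f i, \<sigma> i))))"
  proof (rule sum.cong[OF refl])
    fix \<sigma> assume p: "\<sigma> \<in> ?P"
    have "(\<Prod>i\<in>?K. \<Sum>l\<in>?M. D $$ (l, i) * D $$ (l, \<sigma> i)) = (\<Sum>f\<in>?F. \<Prod>i\<in>?K. D $$ (f i, i) * D $$ (f i, \<sigma> i))"
      by (rule prod_sum_PiE) simp_all
    thus "signof \<sigma> * (\<Prod>i\<in>?K. \<Sum>l\<in>?M. D $$ (l, i) * D $$ (l, \<sigma> i)) = (\<Sum>f\<in>?F. (\<Prod>i\<in>?K. D $$ (f i, i)) * (signof \<sigma> * (\<Prod>i\<in>?K. D $$ (f i, \<sigma> i))))"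
      by (simp only: sum_distrib_left prod.distrib ac_simps)
  qed
  also have "\<dots> = (\<Sum>f\<in>?F. \<Sum>\<sigma>\<in>?P. (\<Prod>i\<in>?K. D $$ (f i, i)) * (signof \<sigma> * (\<Prod>i\<in>?K. D $$ (f i, \<sigma> i))))"
    by (rule sum.swap)
  also have "\<dots> = (\<Sum>f\<in>?F. h f)"
  proof (rule sum.cong[OF refl])
    fix f assume "f \<in> ?F"
    have Rc: "R f \<in> carrier_mat k k" unfolding R_def by simp
    have "det (R f) = (\<Sum>\<sigma>\<in>?P. signof \<sigma> * (\<Prod>i=0..<k. R f $$ (i, \<sigma> i)))"
      by (rule det_def'[OF Rc])
    also have "\<dots> = (\<Sum>\<sigma>\<in>?P. signof \<sigma> * (\<Prod>i\<in>?K. D $$ (f i, \<sigma> i)))"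
    proof (rule sum.cong[OF refl])
      fix \<sigma> assume p: "\<sigma> \<in> ?P"
      have "(\<Prod>i=0..<k. R f $$ (i, \<sigma> i)) = (\<Prod>i\<in>?K. D $$ (f i, \<sigma> i))"
      proof (rule prod.cong[OF refl])
        fix i assume i: "i \<in> ?K"
        have "\<sigma> i \<in> ?K" using permutes_in_image[of \<sigma> ?K i] p i by simp
        thus "R f $$ (i, \<sigma> i) = D $$ (f i, \<sigma> i)" using i unfolding R_def by simp
      qed
      thus "signof \<sigma> * (\<Prod>i=0..<k. R f $$ (i, \<sigma> i)) = signof \<sigma> * (\<Prod>i\<in>?K. D $$ (f i, \<sigma> i))"
        by (rule arg_cong)
    qed
    finally have "det (R f) = (\<Sum>\<sigma>\<in>?P. signof \<sigma> * (\<Prod>i\<in>?K. D $$ (f i, \<sigma> i)))" .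
    thus "(\<Sum>\<sigma>\<in>?P. (\<Prod>i\<in>?K. D $$ (f i, i)) * (signof \<sigma> * (\<Prod>i\<in>?K. D $$ (f i, \<sigma> i)))) = h f"
      unfolding h_def by (simp only: sum_distrib_left)
  qed
  also have "\<dots> = (\<Sum>f\<in>?I. h f)"
  proof (rule sum.mono_neutral_right)
    show "finite ?F" by (simp add: finite_PiE)
    show "?I \<subseteq> ?F" by blast
    show "\<forall>f\<in>?F - ?I. h f = 0"
    proof
      fix f assume "f \<in> ?F - ?I"
      hence "\<not> inj_on f ?K" by blast
      hence "det (R f) = 0" unfolding R_def by (rule det_rows_noninj[OF D])
      thus "h f = 0" unfolding h_def by simp
    qed
  qed
  also have "\<dots> = (\<Sum>p\<in>Sigma ?Xs (\<lambda>_. ?P). h (ii k p))"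
  proof (rule sum.reindex_bij_witness[where i = "ii k" and j = "jj k"])
    fix a assume a: "a \<in> ?I"
    show "ii k (jj k a) = a" by (rule ii_jj[OF a])
    show "jj k a \<in> Sigma ?Xs (\<lambda>_. ?P)" by (rule jj_in[OF a])
    show "h (ii k (jj k a)) = h a" by (simp only: ii_jj[OF a])
  next
    fix b assume b: "b \<in> Sigma ?Xs (\<lambda>_. ?P)"
    show "jj k (ii k b) = b" by (rule jj_ii[OF b])
    show "ii k b \<in> ?I" by (rule ii_in[OF b])
  qed
  also have "\<dots> = (\<Sum>(X, \<pi>)\<in>Sigma ?Xs (\<lambda>_. ?P). h (ii k (X, \<pi>)))"
    by (rule sum.cong) auto
  also have "\<dots> = (\<Sum>X\<in>?Xs. \<Sum>\<pi>\<in>?P. h (ii k (X, \<pi>)))"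
  proof (rule sum.Sigma[symmetric])
    have "?Xs \<subseteq> Pow ?M" by blast
    thus "finite ?Xs" by (rule finite_subset) simp
    show "\<forall>X\<in>?Xs. finite ?P" by (simp add: finite_permutations)
  qed
  also have "\<dots> = (\<Sum>X\<in>?Xs. det (submatrix D X UNIV) ^ 2)"
  proof (rule sum.cong[OF refl])
    fix X assume "X \<in> ?Xs"
    hence X: "X \<subseteq> ?M" "card X = k" by auto
    let ?S = "submatrix D X UNIV"
    note Sc = sub_facts(1)[OF D X] and Se = sub_facts(2)[OF D X]
    have "(\<Sum>\<pi>\<in>?P. h (ii k (X, \<pi>))) = (\<Sum>\<pi>\<in>?P. det ?S * (signof \<pi> * (\<Prod>i\<in>?K. ?S $$ (\<pi> i, i))))"
    proof (rule sum.cong[OF refl])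
      fix \<pi> assume "\<pi> \<in> ?P"
      hence p: "\<pi> permutes ?K" by simp
      have pk: "\<And>i. i \<in> ?K \<Longrightarrow> \<pi> i < k" using permutes_in_image[OF p] by simp
      have iiv: "\<And>i. i \<in> ?K \<Longrightarrow> ii k (X, \<pi>) i = pick X (\<pi> i)" unfolding ii_def by simp
      have "R (ii k (X, \<pi>)) = mat k k (\<lambda>(i,j). ?S $$ (\<pi> i, j))"
        unfolding R_def by (rule eq_matI) (simp_all add: iiv pk Se)
      hence dR: "det (R (ii k (X, \<pi>))) = signof \<pi> * det ?S"
        using det_permute_rows[OF Sc p] by simp
      have "(\<Prod>i\<in>?K. D $$ (ii k (X, \<pi>) i, i)) = (\<Prod>i\<in>?K. ?S $$ (\<pi> i, i))"
        by (rule prod.cong[OF refl]) (simp add: iiv pk Se)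
      thus "h (ii k (X, \<pi>)) = det ?S * (signof \<pi> * (\<Prod>i\<in>?K. ?S $$ (\<pi> i, i)))"
        unfolding h_def dR by (simp only: ac_simps)
    qed
    also have "\<dots> = det ?S * det ?S"
      by (simp only: sum_distrib_left[symmetric] det_transpose_sum[OF Sc])
    finally show "(\<Sum>\<pi>\<in>?P. h (ii k (X, \<pi>))) = det ?S ^ 2" by (simp add: power2_eq_square)
  qed
  finally show ?thesis .
qed



lemma principal_gram:
  fixes B :: "'a::comm_ring_1 mat"
  assumes B: "B \<in> carrier_mat m n" and T: "T \<subseteq> {0..<n}"
  shows "det (submatrix (transpose_mat B * B) T T)
    = (\<Sum>X\<in>{X. X \<subseteq> {0..<m} \<and> card X = card T}. det (submatrix B X T) ^ 2)"
proof -
  let ?D = "submatrix B UNIV T"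
  have dB: "dim_row B = m" "dim_col B = n" using B by auto
  have c1: "{i. i < dim_row B \<and> i \<in> (UNIV::nat set)} = {0..<m}" using dB by auto
  have c2: "{j. j < dim_col B \<and> j \<in> T} = T" using dB T by auto
  have dD: "dim_row ?D = m" "dim_col ?D = card T"
    unfolding dim_submatrix c1 c2 by simp_all
  hence Dc: "?D \<in> carrier_mat m (card T)" by (intro carrier_matI)
  have De: "\<And>l b. l < m \<Longrightarrow> b < card T \<Longrightarrow> ?D $$ (l, b) = B $$ (l, pick T b)"
  proof -
    fix l b assume l: "l < m" and b: "b < card T"
    have "?D $$ (l, b) = B $$ (pick UNIV l, pick T b)"
      by (rule submatrix_index) (simp_all only: c1 c2 l b card_atLeastLessThan diff_zero)
    thus "?D $$ (l, b) = B $$ (l, pick T b)" by (simp only: pick_UNIV)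
  qed
  have fT: "finite T" using T finite_subset by blast
  have pT: "\<And>a. a < card T \<Longrightarrow> pick T a < n"
  proof -
    fix a assume "a < card T"
    hence "pick T a \<in> T" by (rule pick_in_set_le)
    thus "pick T a < n" using T by auto
  qed
  have BB: "transpose_mat B * B \<in> carrier_mat n n" using B by simp
  have dBB: "dim_row (transpose_mat B * B) = n" "dim_col (transpose_mat B * B) = n" using BB by auto
  have c3: "{j. j < n \<and> j \<in> T} = T" using T by auto
  have "submatrix (transpose_mat B * B) T T = transpose_mat ?D * ?D"
  proof (rule eq_matI)
    show "dim_row (submatrix (transpose_mat B * B) T T) = dim_row (transpose_mat ?D * ?D)"
      unfolding dim_submatrix dBB c3 using dD by simp
    show "dim_col (submatrix (transpose_mat B * B) T T) = dim_col (transpose_mat ?D * ?D)"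
      unfolding dim_submatrix dBB c3 using dD by simp
    fix a b assume a: "a < dim_row (transpose_mat ?D * ?D)" and b: "b < dim_col (transpose_mat ?D * ?D)"
    hence a': "a < card T" and b': "b < card T" using dD by auto
    have "submatrix (transpose_mat B * B) T T $$ (a, b) = (transpose_mat B * B) $$ (pick T a, pick T b)"
      by (rule submatrix_index) (simp_all only: dBB c3 a' b')
    also have "\<dots> = (\<Sum>l\<in>{0..<m}. B $$ (l, pick T a) * B $$ (l, pick T b))"
      by (rule gram_entry[OF B pT[OF a'] pT[OF b']])
    also have "\<dots> = (\<Sum>l\<in>{0..<m}. ?D $$ (l, a) * ?D $$ (l, b))"
      by (rule sum.cong[OF refl]) (simp add: De a' b')
    also have "\<dots> = (transpose_mat ?D * ?D) $$ (a, b)"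
      by (rule gram_entry[OF Dc a' b', symmetric])
    finally show "submatrix (transpose_mat B * B) T T $$ (a, b) = (transpose_mat ?D * ?D) $$ (a, b)" .
  qed
  hence "det (submatrix (transpose_mat B * B) T T) = det (transpose_mat ?D * ?D)" by simp
  also have "\<dots> = (\<Sum>X\<in>{X. X \<subseteq> {0..<m} \<and> card X = card T}. det (submatrix ?D X UNIV) ^ 2)"
    by (rule gram_det[OF Dc])
  also have "\<dots> = (\<Sum>X\<in>{X. X \<subseteq> {0..<m} \<and> card X = card T}. det (submatrix B X T) ^ 2)"
    by (simp only: submatrix_split[symmetric])
  finally show ?thesis .
qed

lemma scal_block_index:
  assumes "k \<le> d" "i < d" "j < d"
  shows "scal_block d k c $$ (i, j) = (if i = j then (if i < k then c else 1) else 0)"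
  using assms unfolding scal_block_def by auto

lemma A_tilde_eq:
  assumes A: "A \<in> carrier_mat m n" and s: "s \<le> m" and r: "r \<le> n"
  shows "A_tilde m n s r A y z = mat m n (\<lambda>(i,j). (if i < s then y else 1) * A $$ (i, j) * (if j < r then z else 1))"
proof -
  have S1: "scal_block m s y \<in> carrier_mat m m" using s unfolding scal_block_def by auto
  have S2: "scal_block n r z \<in> carrier_mat n n" using r unfolding scal_block_def by auto
  have L: "scal_block m s y * A = mat m n (\<lambda>(i,j). (if i < s then y else 1) * A $$ (i, j))"
  proof (rule eq_matI)
    fix i j assume i: "i < dim_row (mat m n (\<lambda>(i,j). (if i < s then y else 1) * A $$ (i, j)))"
      and j: "j < dim_col (mat m n (\<lambda>(i,j). (if i < s then y else 1) * A $$ (i, j)))"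
    hence i: "i < m" and j: "j < n" by auto
    have "(scal_block m s y * A) $$ (i, j) = (\<Sum>l\<in>{0..<m}. scal_block m s y $$ (i, l) * A $$ (l, j))"
      using i j S1 A by (simp add: scalar_prod_def)
    also have "\<dots> = (\<Sum>l\<in>{0..<m}. if l = i then (if i < s then y else 1) * A $$ (i, j) else 0)"
      by (rule sum.cong[OF refl]) (use i s in \<open>auto simp: scal_block_index\<close>)
    also have "\<dots> = (if i < s then y else 1) * A $$ (i, j)" using i by simp
    finally show "(scal_block m s y * A) $$ (i, j) = mat m n (\<lambda>(i,j). (if i < s then y else 1) * A $$ (i, j)) $$ (i, j)"
      using i j by simp
  qed (use S1 A in auto)
  show ?thesis unfolding A_tilde_def L
  proof (rule eq_matI)
    fix i j assume i: "i < dim_row (mat m n (\<lambda>(i,j). (if i < s then y else 1) * A $$ (i, j) * (if j < r then z else 1)))"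
      and j: "j < dim_col (mat m n (\<lambda>(i,j). (if i < s then y else 1) * A $$ (i, j) * (if j < r then z else 1)))"
    hence i: "i < m" and j: "j < n" by auto
    have "(mat m n (\<lambda>(i,j). (if i < s then y else 1) * A $$ (i, j)) * scal_block n r z) $$ (i, j)
        = (\<Sum>l\<in>{0..<n}. (if i < s then y else 1) * A $$ (i, l) * scal_block n r z $$ (l, j))"
      using i j S2 by (simp add: scalar_prod_def)
    also have "\<dots> = (\<Sum>l\<in>{0..<n}. if l = j then (if i < s then y else 1) * A $$ (i, j) * (if j < r then z else 1) else 0)"
      by (rule sum.cong[OF refl]) (use j r in \<open>auto simp: scal_block_index\<close>)
    also have "\<dots> = (if i < s then y else 1) * A $$ (i, j) * (if j < r then z else 1)" using j by simp
    finally show "(mat m n (\<lambda>(i,j). (if i < s then y else 1) * A $$ (i, j)) * scal_block n r z) $$ (i, j)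
       = mat m n (\<lambda>(i,j). (if i < s then y else 1) * A $$ (i, j) * (if j < r then z else 1)) $$ (i, j)"
      using i j by simp
  qed (use S2 in auto)
qed


lemma sub_gen:
  fixes M :: "'a mat"
  assumes M: "M \<in> carrier_mat m n" and X: "X \<subseteq> {0..<m}" and Y: "Y \<subseteq> {0..<n}"
  shows "submatrix M X Y \<in> carrier_mat (card X) (card Y)"
    and "\<And>a b. a < card X \<Longrightarrow> b < card Y \<Longrightarrow> submatrix M X Y $$ (a, b) = M $$ (pick X a, pick Y b)"
proof -
  have dM: "dim_row M = m" "dim_col M = n" using M by auto
  have c1: "{i. i < dim_row M \<and> i \<in> X} = X" using X dM by auto
  have c2: "{j. j < dim_col M \<and> j \<in> Y} = Y" using Y dM by auto
  have "dim_row (submatrix M X Y) = card X" "dim_col (submatrix M X Y) = card Y"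
    unfolding dim_submatrix c1 c2 by simp_all
  thus "submatrix M X Y \<in> carrier_mat (card X) (card Y)" by (intro carrier_matI)
  fix a b assume a: "a < card X" and b: "b < card Y"
  show "submatrix M X Y $$ (a, b) = M $$ (pick X a, pick Y b)"
    by (rule submatrix_index) (simp_all only: c1 c2 a b)
qed

lemma minor_scaled:
  fixes A :: "'a::comm_ring_1 mat"
  assumes A: "A \<in> carrier_mat m n" and X: "X \<subseteq> {0..<m}" and Y: "Y \<subseteq> {0..<n}"
    and XY: "card X = card Y"
  shows "det (submatrix (mat m n (\<lambda>(i,j). cy i * A $$ (i, j) * cz j)) X Y)
    = (\<Prod>x\<in>X. cy x) * (\<Prod>y\<in>Y. cz y) * det (submatrix A X Y)"
proof -
  let ?M = "mat m n (\<lambda>(i,j). cy i * A $$ (i, j) * cz j)"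
  let ?k = "card X" and ?K = "{0..<card X}"
  let ?SM = "submatrix ?M X Y" and ?SA = "submatrix A X Y"
  have Mc: "?M \<in> carrier_mat m n" by simp
  have fX: "finite X" using X finite_subset by blast
  have fY: "finite Y" using Y finite_subset by blast
  have SMc: "?SM \<in> carrier_mat ?k ?k" using sub_gen(1)[OF Mc X Y] XY by simp
  have SAc: "?SA \<in> carrier_mat ?k ?k" using sub_gen(1)[OF A X Y] XY by simp
  have pX: "\<And>a. a < ?k \<Longrightarrow> pick X a < m"
  proof -
    fix a assume "a < ?k"
    hence "pick X a \<in> X" by (rule pick_in_set_le)
    thus "pick X a < m" using X by auto
  qed
  have pY: "\<And>a. a < ?k \<Longrightarrow> pick Y a < n"
  proof -
    fix a assume "a < ?k"
    hence "pick Y a \<in> Y" using XY by (simp add: pick_in_set_le)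
    thus "pick Y a < n" using Y by auto
  qed
  have SMe: "\<And>a b. a < ?k \<Longrightarrow> b < ?k \<Longrightarrow> ?SM $$ (a, b) = cy (pick X a) * ?SA $$ (a, b) * cz (pick Y b)"
  proof -
    fix a b assume a: "a < ?k" and b: "b < ?k"
    have "?SM $$ (a, b) = ?M $$ (pick X a, pick Y b)" using sub_gen(2)[OF Mc X Y, of a b] a b XY by simp
    also have "\<dots> = cy (pick X a) * A $$ (pick X a, pick Y b) * cz (pick Y b)" using pX[OF a] pY[OF b] by simp
    also have "A $$ (pick X a, pick Y b) = ?SA $$ (a, b)" using sub_gen(2)[OF A X Y, of a b] a b XY by simp
    finally show "?SM $$ (a, b) = cy (pick X a) * ?SA $$ (a, b) * cz (pick Y b)" .
  qed
  have "det ?SM = (\<Sum>\<tau>\<in>{\<tau>. \<tau> permutes ?K}. signof \<tau> * (\<Prod>a=0..<?k. ?SM $$ (a, \<tau> a)))"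
    by (rule det_def'[OF SMc])
  also have "\<dots> = (\<Sum>\<tau>\<in>{\<tau>. \<tau> permutes ?K}. ((\<Prod>a\<in>?K. cy (pick X a)) * (\<Prod>a\<in>?K. cz (pick Y a))) * (signof \<tau> * (\<Prod>a=0..<?k. ?SA $$ (a, \<tau> a))))"
  proof (rule sum.cong[OF refl])
    fix \<tau> assume "\<tau> \<in> {\<tau>. \<tau> permutes ?K}"
    hence t: "\<tau> permutes ?K" by simp
    have tk: "\<And>a. a \<in> ?K \<Longrightarrow> \<tau> a < ?k" using permutes_in_image[OF t] by simp
    have "(\<Prod>a=0..<?k. ?SM $$ (a, \<tau> a)) = (\<Prod>a\<in>?K. cy (pick X a) * ?SA $$ (a, \<tau> a) * cz (pick Y (\<tau> a)))"
      by (rule prod.cong[OF refl]) (simp add: SMe tk)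
    also have "\<dots> = (\<Prod>a\<in>?K. cy (pick X a)) * (\<Prod>a\<in>?K. ?SA $$ (a, \<tau> a)) * (\<Prod>a\<in>?K. cz (pick Y (\<tau> a)))"
      by (simp only: prod.distrib)
    also have "(\<Prod>a\<in>?K. cz (pick Y (\<tau> a))) = (\<Prod>a\<in>?K. cz (pick Y a))"
      using prod.permute[OF t, of "\<lambda>a. cz (pick Y a)"] by (simp add: o_def)
    finally show "signof \<tau> * (\<Prod>a=0..<?k. ?SM $$ (a, \<tau> a)) = ((\<Prod>a\<in>?K. cy (pick X a)) * (\<Prod>a\<in>?K. cz (pick Y a))) * (signof \<tau> * (\<Prod>a=0..<?k. ?SA $$ (a, \<tau> a)))"
      by (simp only: ac_simps)
  qed
  also have "\<dots> = ((\<Prod>a\<in>?K. cy (pick X a)) * (\<Prod>a\<in>?K. cz (pick Y a))) * det ?SA"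
    by (simp only: sum_distrib_left[symmetric] det_def'[OF SAc])
  also have "(\<Prod>a\<in>?K. cy (pick X a)) = (\<Prod>x\<in>X. cy x)"
    by (rule prod.reindex_bij_betw[OF pick_bij[OF fX]])
  also have "(\<Prod>a\<in>?K. cz (pick Y a)) = (\<Prod>x\<in>Y. cz x)"
    unfolding XY by (rule prod.reindex_bij_betw[OF pick_bij[OF fY]])
  finally show ?thesis .
qed

lemma prod_if_pow:
  fixes X :: "nat set" and c :: "'a::comm_monoid_mult"
  assumes "finite X"
  shows "(\<Prod>x\<in>X. if x < s then c else 1) = c ^ card (X \<inter> {0..<s})"
proof -
  have "(\<Prod>x\<in>X. if x < s then c else 1) = (\<Prod>x\<in>{x\<in>X. x < s}. c)"
    by (rule prod.inter_filter[symmetric, OF assms])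
  also have "{x\<in>X. x < s} = X \<inter> {0..<s}" by auto
  finally show ?thesis by simp
qed


lemma regroup:
  fixes F :: "nat set \<Rightarrow> nat set \<Rightarrow> 'a::comm_ring_1" and w :: "nat \<Rightarrow> nat \<Rightarrow> nat \<Rightarrow> 'a"
  shows "(\<Sum>j=0..n. \<Sum>p=0..s. \<Sum>q=0..r. w j p q *
      (\<Sum>X\<in>{X. X \<subseteq> {0..<m} \<and> card X = j \<and> card (X \<inter> {0..<s}) = p}.
        \<Sum>Y\<in>{Y. Y \<subseteq> {0..<n} \<and> card Y = j \<and> card (Y \<inter> {0..<r}) = q}. F X Y))
    = (\<Sum>Y\<in>Pow {0..<n}. \<Sum>X\<in>{X. X \<subseteq> {0..<m} \<and> card X = card Y}.
        w (card Y) (card (X \<inter> {0..<s})) (card (Y \<inter> {0..<r})) * F X Y)"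
proof -
  define G where "G X Y = w (card Y) (card (X \<inter> {0..<s})) (card (Y \<inter> {0..<r})) * F X Y" for X Y
  define SX where "SX j = {X. X \<subseteq> {0..<m} \<and> card X = j}" for j
  define SY where "SY j = {Y. Y \<subseteq> {0..<n} \<and> card Y = j}" for j
  have fSX: "finite (SX j)" for j
  proof -
    have "SX j \<subseteq> Pow {0..<m}" unfolding SX_def by blast
    thus ?thesis by (rule finite_subset) simp
  qed
  have fSY: "finite (SY j)" for j
  proof -
    have "SY j \<subseteq> Pow {0..<n}" unfolding SY_def by blast
    thus ?thesis by (rule finite_subset) simp
  qed
  have eX: "{X. X \<subseteq> {0..<m} \<and> card X = j \<and> card (X \<inter> {0..<s}) = p} = {X \<in> SX j. card (X \<inter> {0..<s}) = p}" for j p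
    unfolding SX_def by blast
  have eY: "{Y. Y \<subseteq> {0..<n} \<and> card Y = j \<and> card (Y \<inter> {0..<r}) = q} = {Y \<in> SY j. card (Y \<inter> {0..<r}) = q}" for j q
    unfolding SY_def by blast
  have "(\<Sum>j=0..n. \<Sum>p=0..s. \<Sum>q=0..r. w j p q *
      (\<Sum>X\<in>{X. X \<subseteq> {0..<m} \<and> card X = j \<and> card (X \<inter> {0..<s}) = p}.
        \<Sum>Y\<in>{Y. Y \<subseteq> {0..<n} \<and> card Y = j \<and> card (Y \<inter> {0..<r}) = q}. F X Y))
    = (\<Sum>j=0..n. \<Sum>p=0..s. \<Sum>q=0..r. \<Sum>X\<in>{X \<in> SX j. card (X \<inter> {0..<s}) = p}. \<Sum>Y\<in>{Y \<in> SY j. card (Y \<inter> {0..<r}) = q}. G X Y)"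
  proof (intro sum.cong refl)
    fix j p q
    show "w j p q * (\<Sum>X\<in>{X. X \<subseteq> {0..<m} \<and> card X = j \<and> card (X \<inter> {0..<s}) = p}.
        \<Sum>Y\<in>{Y. Y \<subseteq> {0..<n} \<and> card Y = j \<and> card (Y \<inter> {0..<r}) = q}. F X Y)
      = (\<Sum>X\<in>{X \<in> SX j. card (X \<inter> {0..<s}) = p}. \<Sum>Y\<in>{Y \<in> SY j. card (Y \<inter> {0..<r}) = q}. G X Y)"
      unfolding eX eY sum_distrib_left
    proof (intro sum.cong refl)
      fix X Y assume X: "X \<in> {X \<in> SX j. card (X \<inter> {0..<s}) = p}" and Y: "Y \<in> {Y \<in> SY j. card (Y \<inter> {0..<r}) = q}"
      hence "card Y = j" "card (X \<inter> {0..<s}) = p" "card (Y \<inter> {0..<r}) = q" unfolding SY_def by auto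
      thus "w j p q * F X Y = G X Y" unfolding G_def by simp
    qed
  qed
  also have "\<dots> = (\<Sum>j=0..n. \<Sum>p=0..s. \<Sum>X\<in>{X \<in> SX j. card (X \<inter> {0..<s}) = p}. \<Sum>q=0..r. \<Sum>Y\<in>{Y \<in> SY j. card (Y \<inter> {0..<r}) = q}. G X Y)"
    by (intro sum.cong refl sum.swap)
  also have "\<dots> = (\<Sum>j=0..n. \<Sum>p=0..s. \<Sum>X\<in>{X \<in> SX j. card (X \<inter> {0..<s}) = p}. \<Sum>Y\<in>SY j. G X Y)"
  proof (intro sum.cong refl)
    fix j X
    have "(\<lambda>Y. card (Y \<inter> {0..<r})) ` SY j \<subseteq> {0..r}"
    proof
      fix q assume "q \<in> (\<lambda>Y. card (Y \<inter> {0..<r})) ` SY j"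
      then obtain Y where "q = card (Y \<inter> {0..<r})" by blast
      moreover have "card (Y \<inter> {0..<r}) \<le> card {0..<r}" by (rule card_mono) auto
      ultimately show "q \<in> {0..r}" by simp
    qed
    thus "(\<Sum>q=0..r. \<Sum>Y\<in>{Y \<in> SY j. card (Y \<inter> {0..<r}) = q}. G X Y) = (\<Sum>Y\<in>SY j. G X Y)"
      by (rule sum.group[OF fSY finite_atLeastAtMost])
  qed
  also have "\<dots> = (\<Sum>j=0..n. \<Sum>X\<in>SX j. \<Sum>Y\<in>SY j. G X Y)"
  proof (intro sum.cong refl)
    fix j
    have "(\<lambda>X. card (X \<inter> {0..<s})) ` SX j \<subseteq> {0..s}"
    proof
      fix p assume "p \<in> (\<lambda>X. card (X \<inter> {0..<s})) ` SX j"
      then obtain X where "p = card (X \<inter> {0..<s})" by blast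
      moreover have "card (X \<inter> {0..<s}) \<le> card {0..<s}" by (rule card_mono) auto
      ultimately show "p \<in> {0..s}" by simp
    qed
    thus "(\<Sum>p=0..s. \<Sum>X\<in>{X \<in> SX j. card (X \<inter> {0..<s}) = p}. \<Sum>Y\<in>SY j. G X Y) = (\<Sum>X\<in>SX j. \<Sum>Y\<in>SY j. G X Y)"
      by (rule sum.group[OF fSX finite_atLeastAtMost])
  qed
  also have "\<dots> = (\<Sum>j=0..n. \<Sum>Y\<in>SY j. \<Sum>X\<in>SX (card Y). G X Y)"
  proof (rule sum.cong[OF refl])
    fix j
    have "(\<Sum>X\<in>SX j. \<Sum>Y\<in>SY j. G X Y) = (\<Sum>Y\<in>SY j. \<Sum>X\<in>SX j. G X Y)" by (rule sum.swap)
    also have "\<dots> = (\<Sum>Y\<in>SY j. \<Sum>X\<in>SX (card Y). G X Y)"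
      by (rule sum.cong[OF refl]) (simp add: SY_def)
    finally show "(\<Sum>X\<in>SX j. \<Sum>Y\<in>SY j. G X Y) = (\<Sum>Y\<in>SY j. \<Sum>X\<in>SX (card Y). G X Y)" .
  qed
  also have "\<dots> = (\<Sum>Y\<in>Pow {0..<n}. \<Sum>X\<in>SX (card Y). G X Y)"
  proof -
    have eS: "SY j = {Y \<in> Pow {0..<n}. card Y = j}" for j unfolding SY_def by blast
    have "card ` Pow {0..<n} \<subseteq> {0..n}"
    proof
      fix j assume "j \<in> card ` Pow {0..<n}"
      then obtain Y where "Y \<subseteq> {0..<n}" "j = card Y" by blast
      moreover have "card Y \<le> card {0..<n}" by (rule card_mono) (use \<open>Y \<subseteq> {0..<n}\<close> in auto)
      ultimately show "j \<in> {0..n}" by simp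
    qed
    thus ?thesis unfolding eS by (rule sum.group[OF finite_Pow_iff[THEN iffD2] finite_atLeastAtMost, rotated]) simp
  qed
  finally show ?thesis unfolding G_def SX_def .
qed


lemma pow2_mult: "((a::real) ^ p) ^ 2 = a ^ (2 * p)"
  by (metis power_mult mult.commute)

theorem mainTheorem6:
  fixes m n s r :: nat and A :: "real mat"
  assumes "n \<le> m" and "1 \<le> s" and "s \<le> m" and "1 \<le> r" and "r \<le> n"
    and "A \<in> carrier_mat m n"
  shows "\<forall>x y z :: real. theta m n s r A x y z =
    (\<Sum>j=0..n. \<Sum>p=0..s. \<Sum>q=0..r. x ^ (n - j) * y ^ (2 * p) * z ^ (2 * q) * coeffA m n s r A j p q)"
proof (intro allI)
  fix x y z :: real
  note A = assms(6)
  let ?At = "A_tilde m n s r A y z"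
  define cy where "cy i = (if i < s then y else 1)" for i :: nat
  define cz where "cz i = (if i < r then z else 1)" for i :: nat
  have AtE: "?At = mat m n (\<lambda>(i,j). cy i * A $$ (i, j) * cz j)"
    using A_tilde_eq[OF A assms(3) assms(5)] unfolding cy_def cz_def .
  have Atc: "?At \<in> carrier_mat m n" unfolding AtE by simp
  have Nc: "transpose_mat ?At * ?At \<in> carrier_mat n n" using Atc by simp
  have "theta m n s r A x y z = det (x \<cdot>\<^sub>m 1\<^sub>m n + transpose_mat ?At * ?At)"
    unfolding theta_def ..
  also have "\<dots> = (\<Sum>T\<in>Pow {0..<n}. x ^ (n - card T) * det (submatrix (transpose_mat ?At * ?At) T T))"
    by (rule det_xI_plus[OF Nc])
  also have "\<dots> = (\<Sum>T\<in>Pow {0..<n}. \<Sum>X\<in>{X. X \<subseteq> {0..<m} \<and> card X = card T}.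
      x ^ (n - card T) * y ^ (2 * card (X \<inter> {0..<s})) * z ^ (2 * card (T \<inter> {0..<r})) * (minor A X T)\<^sup>2)"
  proof (rule sum.cong[OF refl])
    fix T assume "T \<in> Pow {0..<n}"
    hence T: "T \<subseteq> {0..<n}" by simp
    have fT: "finite T" using T finite_subset by blast
    have "det (submatrix (transpose_mat ?At * ?At) T T) = (\<Sum>X\<in>{X. X \<subseteq> {0..<m} \<and> card X = card T}. det (submatrix ?At X T) ^ 2)"
      by (rule principal_gram[OF Atc T])
    also have "\<dots> = (\<Sum>X\<in>{X. X \<subseteq> {0..<m} \<and> card X = card T}. y ^ (2 * card (X \<inter> {0..<s})) * z ^ (2 * card (T \<inter> {0..<r})) * (minor A X T)\<^sup>2)"
    proof (rule sum.cong[OF refl])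
      fix X assume "X \<in> {X. X \<subseteq> {0..<m} \<and> card X = card T}"
      hence X: "X \<subseteq> {0..<m}" and XT: "card X = card T" by auto
      have fX: "finite X" using X finite_subset by blast
      have "det (submatrix ?At X T) = (\<Prod>x\<in>X. cy x) * (\<Prod>t\<in>T. cz t) * det (submatrix A X T)"
        unfolding AtE by (rule minor_scaled[OF A X T XT])
      also have "(\<Prod>x\<in>X. cy x) = y ^ card (X \<inter> {0..<s})"
        unfolding cy_def by (rule prod_if_pow[OF fX])
      also have "(\<Prod>t\<in>T. cz t) = z ^ card (T \<inter> {0..<r})"
        unfolding cz_def by (rule prod_if_pow[OF fT])
      finally have "det (submatrix ?At X T) = y ^ card (X \<inter> {0..<s}) * z ^ card (T \<inter> {0..<r}) * minor A X T"
        unfolding minor_def .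
      thus "det (submatrix ?At X T) ^ 2 = y ^ (2 * card (X \<inter> {0..<s})) * z ^ (2 * card (T \<inter> {0..<r})) * (minor A X T)\<^sup>2"
        by (simp only: power_mult_distrib pow2_mult)
    qed
    finally show "x ^ (n - card T) * det (submatrix (transpose_mat ?At * ?At) T T) = (\<Sum>X\<in>{X. X \<subseteq> {0..<m} \<and> card X = card T}.
      x ^ (n - card T) * y ^ (2 * card (X \<inter> {0..<s})) * z ^ (2 * card (T \<inter> {0..<r})) * (minor A X T)\<^sup>2)"
      by (simp only: sum_distrib_left mult.assoc)
  qed
  also have "\<dots> = (\<Sum>j=0..n. \<Sum>p=0..s. \<Sum>q=0..r. x ^ (n - j) * y ^ (2 * p) * z ^ (2 * q) * coeffA m n s r A j p q)"
    unfolding coeffA_def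
    by (rule regroup[where w = "\<lambda>j p q. x ^ (n - j) * y ^ (2 * p) * z ^ (2 * q)" and F = "\<lambda>X Y. (minor A X Y)\<^sup>2", symmetric])
  finally show "theta m n s r A x y z =
    (\<Sum>j=0..n. \<Sum>p=0..s. \<Sum>q=0..r. x ^ (n - j) * y ^ (2 * p) * z ^ (2 * q) * coeffA m n s r A j p q)" .
qed

end
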